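(* Let $p>q\ge2$, fix $\arg\mu\in\mathbb{R}$ and $k\in\{0,\dots,r-1\}$, and for $\rho>0$ let $N(\rho)$ be the number of $\theta\in[0,2\pi)$ with $T(\theta;\rho)=0$. If $0<\rho_1<\rho_2$ are such that all zeros of $T(\cdot;\rho_1)$ and of $T(\cdot;\rho_2)$ are simple, then $N(\rho_1)\ge N(\rho_2)$; that is, the number of solutions of $T(\theta;\rho)=0$ is monotone non-increasing in $\rho=|\mu|\in(0,\infty)$.
   Context: Let $r=\gcd(p-1,q-1)$, $A=p^{-1/(p-1)}$, $B=q^{-1/(q-1)}$, $m=\frac{(p-1)(q+1)}{2r}$, $n=\frac{(p+1)(q-1)}{2r}$, $c_k=\frac{1}{p-1}(-2\arg\mu+2\pi k)$, $c_k'=\frac{p+1}{2}c_k$, $C=\frac{(p-1)B}{(q-1)A}>0$, and for $\rho>0$, $T(\theta;\rho)=(-1)^k\rho\sin(n\theta+c_k')+C\sin(m\theta)$. (The zero set of $T(\cdot;\rho)$ is $2\pi$-periodic.) *)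

theory Defs
  imports "HOL-Analysis.Analysis"
begin

definition r_par :: "nat \<Rightarrow> nat \<Rightarrow> nat" where
  "r_par p q = gcd (p - 1) (q - 1)"

definition A_par :: "nat \<Rightarrow> real" where
  "A_par p = real p powr (- 1 / (real p - 1))"

definition B_par :: "nat \<Rightarrow> real" where
  "B_par q = real q powr (- 1 / (real q - 1))"

definition m_par :: "nat \<Rightarrow> nat \<Rightarrow> real" where
  "m_par p q = (real p - 1) * (real q + 1) / (2 * real (r_par p q))"

definition n_par :: "nat \<Rightarrow> nat \<Rightarrow> real" where
  "n_par p q = (real p + 1) * (real q - 1) / (2 * real (r_par p q))"

definition c_par :: "nat \<Rightarrow> real \<Rightarrow> nat \<Rightarrow> real" where
  "c_par p argmu k = (1 / (real p - 1)) * (- 2 * argmu + 2 * pi * real k)"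

definition c'_par :: "nat \<Rightarrow> real \<Rightarrow> nat \<Rightarrow> real" where
  "c'_par p argmu k = (real p + 1) / 2 * c_par p argmu k"

definition C_par :: "nat \<Rightarrow> nat \<Rightarrow> real" where
  "C_par p q = ((real p - 1) * B_par q) / ((real q - 1) * A_par p)"

definition T_fun :: "nat \<Rightarrow> nat \<Rightarrow> real \<Rightarrow> nat \<Rightarrow> real \<Rightarrow> real \<Rightarrow> real" where
  "T_fun p q argmu k \<rho> \<theta> =
     (-1) ^ k * \<rho> * sin (n_par p q * \<theta> + c'_par p argmu k) + C_par p q * sin (m_par p q * \<theta>)"

definition N_count :: "nat \<Rightarrow> nat \<Rightarrow> real \<Rightarrow> nat \<Rightarrow> real \<Rightarrow> nat" where
  "N_count p q argmu k \<rho> = card {\<theta>. 0 \<le> \<theta> \<and> \<theta> < 2 * pi \<and> T_fun p q argmu k \<rho> \<theta> = 0}"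

definition simple_zeros :: "nat \<Rightarrow> nat \<Rightarrow> real \<Rightarrow> nat \<Rightarrow> real \<Rightarrow> bool" where
  "simple_zeros p q argmu k \<rho> =
     (\<forall>\<theta>. T_fun p q argmu k \<rho> \<theta> = 0 \<longrightarrow> deriv (T_fun p q argmu k \<rho>) \<theta> \<noteq> 0)"

end

theory Submission
  imports Defs
begin


lemma finite_simple_zeros:
  fixes f f' :: "real \<Rightarrow> real"
  assumes d: "\<And>x. (f has_real_derivative f' x) (at x)"
    and s: "\<And>x. f x = 0 \<Longrightarrow> f' x \<noteq> 0"
  shows "finite {x. a \<le> x \<and> x \<le> b \<and> f x = 0}"
proof (rule ccontr)
  let ?K = "{x. a \<le> x \<and> x \<le> b \<and> f x = 0}"
  assume inf: "infinite ?K"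
  have cf: "continuous_on UNIV f"
    using d by (meson DERIV_isCont continuous_at_imp_continuous_on)
  have "closed ?K"
    by (intro closed_Collect_conj closed_Collect_le closed_Collect_eq cf continuous_on_const continuous_on_id)
  moreover have "bounded ?K"
    by (rule bounded_subset[of "{a..b}"]) auto
  ultimately have "compact ?K" using compact_eq_bounded_closed by blast
  then obtain x where xK: "x \<in> ?K" and lp: "x islimpt ?K"
    using inf compact_eq_Bolzano_Weierstrass by blast
  then have fx: "f x = 0" by auto
  have "\<exists>d>0. \<forall>y. y \<noteq> x \<and> \<bar>y - x\<bar> < d \<longrightarrow> f y \<noteq> 0"
  proof (cases "f' x > 0")
    case True
    obtain d1 where d1: "d1 > 0" "\<forall>h>0. h < d1 \<longrightarrow> f x < f (x + h)"
      using DERIV_pos_inc_right[OF d True] by blast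
    obtain d2 where d2: "d2 > 0" "\<forall>h>0. h < d2 \<longrightarrow> f (x - h) < f x"
      using DERIV_pos_inc_left[OF d True] by blast
    show ?thesis
    proof (intro exI[of _ "min d1 d2"] conjI allI impI)
      fix y assume y: "y \<noteq> x \<and> \<bar>y - x\<bar> < min d1 d2"
      show "f y \<noteq> 0"
      proof (cases "y > x")
        case True
        then show ?thesis using d1(2)[rule_format, of "y - x"] y fx by auto
      next
        case False
        then show ?thesis using d2(2)[rule_format, of "x - y"] y fx by auto
      qed
    qed (use d1 d2 in auto)
  next
    case False
    then have neg: "f' x < 0" using s fx by force
    obtain d1 where d1: "d1 > 0" "\<forall>h>0. h < d1 \<longrightarrow> f x > f (x + h)"
      using DERIV_neg_dec_right[OF d neg] by blast
    obtain d2 where d2: "d2 > 0" "\<forall>h>0. h < d2 \<longrightarrow> f (x - h) > f x"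
      using DERIV_neg_dec_left[OF d neg] by blast
    show ?thesis
    proof (intro exI[of _ "min d1 d2"] conjI allI impI)
      fix y assume y: "y \<noteq> x \<and> \<bar>y - x\<bar> < min d1 d2"
      show "f y \<noteq> 0"
      proof (cases "y > x")
        case True
        then show ?thesis using d1(2)[rule_format, of "y - x"] y fx by auto
      next
        case False
        then show ?thesis using d2(2)[rule_format, of "x - y"] y fx by auto
      qed
    qed (use d1 d2 in auto)
  qed
  then obtain e where e: "e > 0" "\<forall>y. y \<noteq> x \<and> \<bar>y - x\<bar> < e \<longrightarrow> f y \<noteq> 0" by blast
  from lp e(1) obtain y where "y \<in> ?K" "y \<noteq> x" "dist y x < e"
    unfolding islimpt_approachable by blast
  with e(2) show False by (auto simp: dist_real_def)
qed



locale wr =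
  fixes S t S' t' :: "real \<Rightarrow> real" and \<kappa> C :: real
  assumes dS: "\<And>x. (S has_real_derivative S' x) (at x)"
  and dt: "\<And>x. (t has_real_derivative t' x) (at x)"
  and dh: "\<And>x. ((\<lambda>x. S x * t' x - S' x * t x) has_real_derivative (\<kappa> * (S x * t x))) (at x)"
  and kneg: "\<kappa> < 0" and Cpos: "0 < C"
  and tzl: "\<And>a. \<exists>y\<le>a. t y = 0" and tzr: "\<And>a. \<exists>y\<ge>a. t y = 0"
begin

definition "h x = S x * t' x - S' x * t x"
definition "E \<rho> x = \<rho> * S x + C * t x"
definition "g x = - C * t x / S x"

lemma contS: "isCont S x" using dS DERIV_isCont by blast
lemma contt: "isCont t x" using dt DERIV_isCont by blast

lemma dh': "(h has_real_derivative \<kappa>*(S x*t x)) (at x)"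
proof -
  have "h = (\<lambda>x. S x * t' x - S' x * t x)" by (rule ext) (simp add: h_def)
  then show ?thesis using dh by simp
qed

lemma h_mono: assumes "u \<le> v" "\<forall>x\<in>{u..v}. S x * t x \<le> 0" shows "h u \<le> h v"
proof (rule DERIV_nonneg_imp_nondecreasing[of u v h, OF assms(1)])
  fix x assume "u \<le> x" "x \<le> v"
  then have "S x * t x \<le> 0" using assms(2) by auto
  then have "0 \<le> \<kappa> * (S x * t x)" using kneg by (simp add: mult_nonpos_nonpos)
  then show "\<exists>y. (h has_real_derivative y) (at x) \<and> 0 \<le> y" using dh' by blast
qed

lemma g_deriv: assumes "S x \<noteq> 0" shows "(g has_real_derivative (- C * h x / (S x * S x))) (at x)"
proof -
  have "((\<lambda>x. - C * t x / S x) has_real_derivative ((- C * t' x) * S x - (- C * t x) * S' x) / (S x * S x)) (at x)"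
    by (intro DERIV_divide DERIV_cmult dt dS assms)
  moreover have "g = (\<lambda>x. - C * t x / S x)" by (rule ext) (simp add: g_def)
  ultimately show ?thesis by (simp add: h_def algebra_simps)
qed

lemma g_inc: assumes "u < v" "\<forall>x\<in>{u..v}. S x \<noteq> 0 \<and> h x < 0" shows "g u < g v"
proof (rule DERIV_pos_imp_increasing[of u v g, OF assms(1)])
  fix x assume "u \<le> x" "x \<le> v"
  then have a: "S x \<noteq> 0" "h x < 0" using assms(2) by auto
  have sq: "0 < S x * S x" using a(1) by (cases "S x > 0") (auto simp: mult_neg_neg)
  have "C * h x < 0" using a Cpos by (simp add: mult_pos_neg)
  then have "0 < - C * h x / (S x * S x)" using sq by (simp add: divide_neg_pos)
  then show "\<exists>y. (g has_real_derivative y) (at x) \<and> 0 < y" using g_deriv[OF a(1)] by blast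
qed

lemma g_dec: assumes "u < v" "\<forall>x\<in>{u..v}. S x \<noteq> 0 \<and> h x > 0" shows "g u > g v"
proof (rule DERIV_neg_imp_decreasing[of u v g, OF assms(1)])
  fix x assume "u \<le> x" "x \<le> v"
  then have a: "S x \<noteq> 0" "h x > 0" using assms(2) by auto
  have sq: "0 < S x * S x" using a(1) by (cases "S x > 0") (auto simp: mult_neg_neg)
  have "C * h x > 0" using a Cpos by simp
  then have "- C * h x / (S x * S x) < 0" using sq by (simp add: divide_neg_pos)
  then show "\<exists>y. (g has_real_derivative y) (at x) \<and> y < 0" using g_deriv[OF a(1)] by blast
qed

lemma gE: "E \<rho> x = 0 \<Longrightarrow> S x \<noteq> 0 \<Longrightarrow> g x = \<rho>"
proof -
  assume "E \<rho> x = 0" "S x \<noteq> 0"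
  then have "C * t x = - \<rho> * S x" unfolding E_def by linarith
  then show ?thesis using \<open>S x \<noteq> 0\<close> by (simp add: g_def)
qed

lemma Ehder: "E \<rho> a = 0 \<Longrightarrow> C * h a = S a * (\<rho> * S' a + C * t' a)"
proof -
  assume "E \<rho> a = 0"
  then have e: "C * t a = - \<rho> * S a" unfolding E_def by linarith
  have "C * h a = C * S a * t' a - S' a * (C * t a)" by (simp add: h_def algebra_simps)
  also have "\<dots> = S a * (\<rho> * S' a + C * t' a)" using e by (simp add: algebra_simps)
  finally show ?thesis .
qed

lemma L:
  assumes "u < v" "\<forall>x\<in>{u..v}. S x * t x < 0" "E \<rho> u = 0" "E \<rho> v = 0"
  shows "h u \<le> 0 \<and> 0 \<le> h v"
proof -
  have Sn: "\<forall>x\<in>{u..v}. S x \<noteq> 0" using assms(2) by fastforce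
  have gu: "g u = \<rho>" using gE assms Sn by auto
  have gv: "g v = \<rho>" using gE assms Sn by auto
  have le: "\<forall>x\<in>{u..v}. S x * t x \<le> 0" using assms(2) by (simp add: less_imp_le)
  have "0 \<le> h v"
  proof (rule ccontr)
    assume "\<not> 0 \<le> h v"
    have "\<forall>x\<in>{u..v}. h x < 0"
    proof
      fix x assume x: "x \<in> {u..v}"
      have "h x \<le> h v" by (rule h_mono) (use x le in auto)
      then show "h x < 0" using \<open>\<not> 0 \<le> h v\<close> by linarith
    qed
    then have "g u < g v" using g_inc assms(1) Sn by blast
    then show False using gu gv by simp
  qed
  moreover have "h u \<le> 0"
  proof (rule ccontr)
    assume "\<not> h u \<le> 0"
    have "\<forall>x\<in>{u..v}. h x > 0"
    proof
      fix x assume x: "x \<in> {u..v}"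
      have "h u \<le> h x" by (rule h_mono) (use x le in auto)
      then show "h x > 0" using \<open>\<not> h u \<le> 0\<close> by linarith
    qed
    then have "g u > g v" using g_dec assms(1) Sn by blast
    then show False using gu gv by simp
  qed
  ultimately show ?thesis by simp
qed

end


context wr begin

lemma contSt: "continuous_on UNIV (\<lambda>x. S x * t x)"
  by (intro continuous_at_imp_continuous_on ballI isCont_mult contS contt)

lemma contE: "isCont (E \<rho>) x"
proof -
  have "E \<rho> = (\<lambda>x. \<rho> * S x + C * t x)" by (rule ext) (simp add: E_def)
  then show ?thesis by (simp add: isCont_add isCont_mult contS contt)
qed

lemma exL:
  assumes r: "0 < \<rho>1" "\<rho>1 < \<rho>2" and Ea: "E \<rho>2 a = 0" and Sa: "S a \<noteq> 0" and ha: "h a < 0"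
  shows "\<exists>c<a. E \<rho>1 c = 0 \<and> (\<forall>x\<in>{c..a}. S x * t x < 0)"
proof -
  have ta: "C * t a = - \<rho>2 * S a" using Ea unfolding E_def by linarith
  have "0 < S a * S a" using Sa by (cases "S a > 0") (auto simp: mult_neg_neg)
  moreover have "C * (S a * t a) = S a * (C * t a)" by (simp add: algebra_simps)
  moreover have "S a * (C * t a) = - \<rho>2 * (S a * S a)" using ta by (simp add: algebra_simps)
  ultimately have "C * (S a * t a) < 0" using r by (simp add: mult_pos_pos)
  then have Sta: "S a * t a < 0" using Cpos by (simp add: mult_less_0_iff)
  define Z where "Z = {x. x \<le> a \<and> S x * t x = 0}"
  have clZ: "closed Z" unfolding Z_def
    by (intro closed_Collect_conj closed_Collect_le closed_Collect_eq contSt continuous_on_const continuous_on_id)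
  obtain y0 where "y0 \<le> a" "t y0 = 0" using tzl by blast
  then have neZ: "Z \<noteq> {}" unfolding Z_def by auto
  have bdZ: "bdd_above Z" unfolding Z_def by (auto intro: bdd_aboveI[of _ a])
  define y where "y = Sup Z"
  have yZ: "y \<in> Z" using closed_contains_Sup[OF neZ bdZ clZ] y_def by simp
  then have ya: "y \<le> a" and Sty: "S y * t y = 0" unfolding Z_def by auto
  have ylt: "y < a" using ya Sty Sta by (cases "y = a") auto
  have hz: "S x * t x \<noteq> 0" if "y < x" "x \<le> a" for x
  proof
    assume "S x * t x = 0"
    then have "x \<in> Z" unfolding Z_def using that by auto
    then have "x \<le> y" unfolding y_def using bdZ by (simp add: cSup_upper)
    then show False using that by simp
  qed
  have hneg: "S x * t x < 0" if xy: "y < x" and xa: "x \<le> a" for x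
  proof (rule ccontr)
    assume "\<not> S x * t x < 0"
    then have "S x * t x \<ge> 0" by simp
    then obtain z where z: "x \<le> z" "z \<le> a" "S z * t z = 0"
      using IVT2'[of "\<lambda>x. S x * t x" a 0 x] Sta xa continuous_on_subset[OF contSt] by auto
    then show False using hz xy by auto
  qed
  have hle: "\<forall>x\<in>{y..a}. S x * t x \<le> 0" using hneg Sty by (auto simp: le_less)
  have hx: "h x < 0" if "y \<le> x" "x \<le> a" for x
  proof -
    have "h x \<le> h a" by (rule h_mono) (use that hle in auto)
    then show ?thesis using ha by simp
  qed
  have Sy: "S y \<noteq> 0"
  proof
    assume S0: "S y = 0"
    have "h y < 0" using hx ya by simp
    then have ty: "t y \<noteq> 0" using S0 by (auto simp: h_def)
    have gb: "g x \<le> \<rho>2" if "y < x" "x \<le> a" for x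
    proof (cases "x = a")
      case True then show ?thesis using gE Ea Sa by simp
    next
      case False
      have "\<forall>z\<in>{x..a}. S z \<noteq> 0 \<and> h z < 0"
      proof
        fix z assume z: "z \<in> {x..a}"
        then have "S z * t z < 0" using hneg[of z] that by auto
        moreover have "h z < 0" using hx[of z] z that by auto
        ultimately show "S z \<noteq> 0 \<and> h z < 0" by auto
      qed
      then have "g x < g a" using g_inc[of x a] that False by auto
      then show ?thesis using gE Ea Sa by simp
    qed
    have ev1: "eventually (\<lambda>x. t x * t y > 0) (at y)"
    proof -
      have "((\<lambda>x. t x * t y) \<longlongrightarrow> t y * t y) (at y)"
        using contt[of y] unfolding isCont_def by (intro tendsto_mult tendsto_const)
      moreover have "t y * t y > 0" using ty by (cases "t y > 0") (auto simp: mult_neg_neg)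
      ultimately show ?thesis by (rule order_tendstoD)
    qed
    have ev2: "eventually (\<lambda>x. E \<rho>2 x * t y > 0) (at y)"
    proof -
      have "((\<lambda>x. E \<rho>2 x * t y) \<longlongrightarrow> E \<rho>2 y * t y) (at y)"
        using contE[where \<rho>=\<rho>2 and x=y] unfolding isCont_def by (intro tendsto_mult tendsto_const)
      moreover have "E \<rho>2 y * t y > 0"
      proof -
        have "t y * t y > 0" using ty by (cases "t y > 0") (auto simp: mult_neg_neg)
        moreover have "E \<rho>2 y * t y = C * (t y * t y)" using S0 by (simp add: E_def)
        ultimately show ?thesis using Cpos by (metis mult_pos_pos)
      qed
      ultimately show ?thesis by (rule order_tendstoD)
    qed
    obtain d where d: "d > 0" "\<forall>x. x \<noteq> y \<and> dist x y < d \<longrightarrow> t x * t y > 0 \<and> E \<rho>2 x * t y > 0"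
      using eventually_conj[OF ev1 ev2] unfolding eventually_at by auto
    obtain e where e: "0 < e" "e \<le> a - y" "e \<le> d" using d ylt
      by (intro that[of "min d (a - y)"]) auto
    define x where "x = y + e / 2"
    have x1: "y < x" "x \<le> a" "dist x y < d"
      using e unfolding x_def dist_real_def by auto
    then have A: "t x * t y > 0" "E \<rho>2 x * t y > 0" using d by auto
    have B: "S x * t x < 0" using hneg x1 by auto
    have G: "g x \<le> \<rho>2" using gb x1 by auto
    have Sx: "S x \<noteq> 0" using B by auto
    have sq: "0 < S x * S x" using Sx by (cases "S x > 0") (auto simp: mult_neg_neg)
    have "S x * E \<rho>2 x = S x * S x * (\<rho>2 - g x)"
      using Sx by (simp add: E_def g_def field_simps)
    also have "\<dots> \<ge> 0" using sq G by simp
    finally have P: "S x * E \<rho>2 x \<ge> 0" .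
    have "(S x * t x) * (t x * t y) < 0" using A B by (simp add: mult_neg_pos)
    then have "S x * t y * (t x * t x) < 0" by (simp add: algebra_simps)
    moreover have "t x * t x > 0"
    proof -
      have "t x \<noteq> 0" using B by auto
      then show ?thesis by (cases "t x > 0") (auto simp: mult_neg_neg)
    qed
    ultimately have Q: "S x * t y < 0" by (simp add: mult_less_0_iff)
    have "(S x * t y) * (E \<rho>2 x * t y) < 0" using Q A by (simp add: mult_neg_pos)
    then have "(S x * E \<rho>2 x) * (t y * t y) < 0" by (simp add: algebra_simps)
    moreover have "t y * t y > 0" using ty by (cases "t y > 0") (auto simp: mult_neg_neg)
    ultimately show False using mult_nonneg_nonneg[OF P, of "t y * t y"] by linarith
  qed
  have ty0: "t y = 0" using Sy Sty by simp
  have SySa: "S y * S a > 0"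
  proof (rule ccontr)
    assume "\<not> S y * S a > 0"
    moreover have "S a * S a > 0" using Sa by (cases "S a > 0") (auto simp: mult_neg_neg)
    ultimately obtain z where z: "y \<le> z" "z \<le> a" "S z * S a = 0"
      using IVT'[of "\<lambda>x. S x * S a" y 0 a] ya
        continuous_at_imp_continuous_on[of "{y..a}" "\<lambda>x. S x * S a"] contS by (auto simp: isCont_mult)
    then have "S z = 0" using Sa by simp
    then show False using z Sy hneg[of z] by (cases "z = y") auto
  qed
  have D1: "E \<rho>1 y * S a > 0" using ty0 SySa r mult_pos_pos[of \<rho>1 "S y * S a"]
    by (simp add: E_def mult.assoc)
  have D2: "E \<rho>1 a * S a < 0"
  proof -
    have "E \<rho>1 a * S a = (\<rho>1 - \<rho>2) * (S a * S a)" using ta by (simp add: E_def algebra_simps)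
    moreover have "S a * S a > 0" using Sa by (cases "S a > 0") (auto simp: mult_neg_neg)
    moreover have "\<rho>1 - \<rho>2 < 0" using r by simp
    ultimately show ?thesis by (metis mult_neg_pos)
  qed
  obtain c where c: "y \<le> c" "c \<le> a" "E \<rho>1 c * S a = 0"
    using IVT2'[of "\<lambda>x. E \<rho>1 x * S a" a 0 y] D1 D2 ya
      continuous_at_imp_continuous_on[of "{y..a}" "\<lambda>x. E \<rho>1 x * S a"] contE by (auto simp: isCont_mult)
  then have Ec: "E \<rho>1 c = 0" using Sa by simp
  have "c \<noteq> y" using D1 Ec by auto
  moreover have "c \<noteq> a" using D2 Ec by auto
  ultimately show ?thesis using c Ec hneg by (intro exI[of _ c]) auto
qed

end


lemma sqpos: "(z::real) \<noteq> 0 \<Longrightarrow> 0 < z * z"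
  by (cases "z > 0") (auto simp: mult_neg_neg)

context wr begin

lemma refl_wr: "wr (\<lambda>x. S (-x)) (\<lambda>x. t (-x)) (\<lambda>x. - S' (-x)) (\<lambda>x. - t' (-x)) \<kappa> C"
proof
  fix x
  show "((\<lambda>x. S (-x)) has_real_derivative - S' (-x)) (at x)"
    using dS[of "-x"] DERIV_mirror by simp
  show "((\<lambda>x. t (-x)) has_real_derivative - t' (-x)) (at x)"
    using dt[of "-x"] DERIV_mirror by simp
  have "((\<lambda>x. h (-x)) has_real_derivative - (\<kappa> * (S (-x) * t (-x)))) (at x)"
    using dh'[of "-x"] DERIV_mirror by blast
  then have "((\<lambda>x. - h (-x)) has_real_derivative (\<kappa> * (S (-x) * t (-x)))) (at x)"
    using DERIV_minus by fastforce
  moreover have "(\<lambda>x. - h (-x)) = (\<lambda>x. S (- x) * - t' (- x) - - S' (- x) * t (- x))"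
    by (rule ext) (simp add: h_def algebra_simps)
  ultimately show "((\<lambda>x. S (- x) * - t' (- x) - - S' (- x) * t (- x)) has_real_derivative
          \<kappa> * (S (- x) * t (- x))) (at x)" by simp
next
  fix a
  obtain y where "y \<ge> -a" "t y = 0" using tzr by blast
  then show "\<exists>y\<le>a. t (- y) = 0" by (intro exI[of _ "-y"]) auto
next
  fix a
  obtain y where "y \<le> -a" "t y = 0" using tzl by blast
  then show "\<exists>y\<ge>a. t (- y) = 0" by (intro exI[of _ "-y"]) auto
qed (use kneg Cpos in auto)

lemma exR:
  assumes r: "0 < \<rho>1" "\<rho>1 < \<rho>2" and Ea: "E \<rho>2 a = 0" and Sa: "S a \<noteq> 0" and ha: "h a > 0"
  shows "\<exists>c>a. E \<rho>1 c = 0 \<and> (\<forall>x\<in>{a..c}. S x * t x < 0)"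
proof -
  interpret R: wr "\<lambda>x. S (-x)" "\<lambda>x. t (-x)" "\<lambda>x. - S' (-x)" "\<lambda>x. - t' (-x)" \<kappa> C
    by (rule refl_wr)
  have RE: "R.E \<rho> x = E \<rho> (-x)" for \<rho> x by (simp add: R.E_def E_def)
  have Rh: "R.h x = - h (-x)" for x by (simp add: R.h_def h_def algebra_simps)
  obtain c where c: "c < -a" "R.E \<rho>1 c = 0" "\<forall>x\<in>{c..-a}. S (-x) * t (-x) < 0"
    using R.exL[of \<rho>1 \<rho>2 "-a"] r Ea Sa ha RE Rh by auto
  show ?thesis
  proof (intro exI[of _ "-c"] conjI ballI)
    show "a < -c" using c by simp
    show "E \<rho>1 (-c) = 0" using c RE by simp
    fix x assume "x \<in> {a..-c}"
    then have "-x \<in> {c..-a}" by auto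
    then show "S x * t x < 0" using c(3) by fastforce
  qed
qed

definition "Rel \<rho>1 \<rho>2 a c \<longleftrightarrow> E \<rho>2 a = 0 \<and> E \<rho>1 c = 0 \<and>
   ((S a = 0 \<and> c = a) \<or>
    (S a \<noteq> 0 \<and> h a < 0 \<and> c < a \<and> (\<forall>x\<in>{c..a}. S x * t x < 0)) \<or>
    (S a \<noteq> 0 \<and> h a > 0 \<and> a < c \<and> (\<forall>x\<in>{a..c}. S x * t x < 0)))"

lemma Rel_ex:
  assumes r: "0 < \<rho>1" "\<rho>1 < \<rho>2" and Ea: "E \<rho>2 a = 0" and s: "\<rho>2 * S' a + C * t' a \<noteq> 0"
  shows "\<exists>c. Rel \<rho>1 \<rho>2 a c"
proof (cases "S a = 0")
  case True
  then have "t a = 0" using Ea Cpos by (simp add: E_def)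
  then have "E \<rho>1 a = 0" using True by (simp add: E_def)
  then show ?thesis using True Ea unfolding Rel_def by blast
next
  case False
  have "C * h a \<noteq> 0" using Ehder[OF Ea] False s by simp
  then have "h a \<noteq> 0" by simp
  then consider "h a < 0" | "h a > 0" by linarith
  then show ?thesis
  proof cases
    case 1
    then obtain c where "c<a" "E \<rho>1 c = 0" "\<forall>x\<in>{c..a}. S x * t x < 0" using exL r Ea False by blast
    then show ?thesis using 1 False Ea unfolding Rel_def by blast
  next
    case 2
    then obtain c where "c>a" "E \<rho>1 c = 0" "\<forall>x\<in>{a..c}. S x * t x < 0" using exR r Ea False by blast
    then show ?thesis using 2 False Ea unfolding Rel_def by blast
  qed
qed

lemma Rel_inj:
  assumes A: "Rel \<rho>1 \<rho>2 a c" and B: "Rel \<rho>1 \<rho>2 b c"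
  shows "a = b"
proof (rule ccontr)
  assume ne: "a \<noteq> b"
  have Ea: "E \<rho>2 a = 0" and Eb: "E \<rho>2 b = 0" using A B unfolding Rel_def by auto
  have aux: False if ab: "a < b" and A: "Rel \<rho>1 \<rho>2 a c" and B: "Rel \<rho>1 \<rho>2 b c"
    and Ea: "E \<rho>2 a = 0" and Eb: "E \<rho>2 b = 0" for a b
  proof -
    consider (a0) "S a = 0" "c = a" | (al) "S a \<noteq> 0" "h a < 0" "c < a" "\<forall>x\<in>{c..a}. S x * t x < 0"
      | (ar) "S a \<noteq> 0" "h a > 0" "a < c" "\<forall>x\<in>{a..c}. S x * t x < 0"
      using A unfolding Rel_def by blast
    note ca = this
    consider (b0) "S b = 0" "c = b" | (bl) "S b \<noteq> 0" "h b < 0" "c < b" "\<forall>x\<in>{c..b}. S x * t x < 0"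
      | (br) "S b \<noteq> 0" "h b > 0" "b < c" "\<forall>x\<in>{b..c}. S x * t x < 0"
      using B unfolding Rel_def by blast
    note cb = this
    show False
    proof (cases rule: ca)
      case a0
      then show ?thesis
      proof (cases rule: cb)
        case b0 then show ?thesis using a0 ab by simp
      next
        case bl then have "S c * t c < 0" by auto
        then show ?thesis using a0 by simp
      next
        case br then show ?thesis using a0 ab by simp
      qed
    next
      case al
      then show ?thesis
      proof (cases rule: cb)
        case b0 then show ?thesis using al ab by simp
      next
        case bl
        have "\<forall>x\<in>{a..b}. S x * t x < 0" using bl al by auto
        then have "0 \<le> h b" using L[OF ab _ Ea Eb] by blast
        then show ?thesis using bl by simp
      next
        case br then show ?thesis using al ab by simp
      qed
    next
      case ar
      then show ?thesis
      proof (cases rule: cb)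
        case b0
        have "c \<in> {a..c}" using ar(3) by simp
        then have "S c * t c < 0" using ar(4) by blast
        then show ?thesis using b0 by simp
      next
        case bl
        have "\<forall>x\<in>{a..b}. S x * t x < 0"
        proof
          fix x assume x: "x \<in> {a..b}"
          show "S x * t x < 0"
          proof (cases "x \<le> c")
            case True then show ?thesis using ar x by auto
          next
            case False then show ?thesis using bl x by auto
          qed
        qed
        then have "h a \<le> 0" using L[OF ab _ Ea Eb] by blast
        then show ?thesis using ar by simp
      next
        case br
        have "\<forall>x\<in>{a..b}. S x * t x < 0" using br ar by auto
        then have "h a \<le> 0" using L[OF ab _ Ea Eb] by blast
        then show ?thesis using ar by simp
      qed
    qed
  qed
  show False
  proof (cases "a < b")
    case True then show ?thesis using aux A B Ea Eb by blast
  next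
    case False then have "b < a" using ne by simp
    then show ?thesis using aux A B Ea Eb by blast
  qed
qed

lemma Rel_shift:
  assumes sg: "\<sigma> * \<sigma> = 1"
    and sS: "\<And>x. S (x + P) = \<sigma> * S x" and st: "\<And>x. t (x + P) = \<sigma> * t x"
    and sS': "\<And>x. S' (x + P) = \<sigma> * S' x" and st': "\<And>x. t' (x + P) = \<sigma> * t' x"
    and R: "Rel \<rho>1 \<rho>2 a c"
  shows "Rel \<rho>1 \<rho>2 (a + P) (c + P)"
proof -
  have s0: "\<sigma> \<noteq> 0" using sg by auto
  have sE: "E \<rho> (x + P) = \<sigma> * E \<rho> x" for \<rho> x unfolding E_def sS st by (simp add: algebra_simps)
  have sh: "h (x + P) = h x" for x
  proof -
    have "h (x + P) = (\<sigma> * \<sigma>) * h x" unfolding h_def sS st sS' st' by (simp add: algebra_simps)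
    then show ?thesis using sg by simp
  qed
  have sSt: "S (x + P) * t (x + P) = S x * t x" for x
  proof -
    have "S (x + P) * t (x + P) = (\<sigma> * \<sigma>) * (S x * t x)" unfolding sS st by (simp add: algebra_simps)
    then show ?thesis using sg by simp
  qed
  have iv: "\<forall>x\<in>{u + P..v + P}. S x * t x < 0" if "\<forall>x\<in>{u..v}. S x * t x < 0" for u v
  proof
    fix x assume "x \<in> {u + P..v + P}"
    then have "x - P \<in> {u..v}" by auto
    then have "S (x - P) * t (x - P) < 0" using that by blast
    then have "S (x - P + P) * t (x - P + P) < 0" by (simp only: sSt)
    then show "S x * t x < 0" by simp
  qed
  show ?thesis using R iv s0 unfolding Rel_def sE sh sS
    by (auto simp: sS)
qed

end


lemma params:
  assumes "q \<ge> 2" "p > q"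
  obtains N2 dd where "n_par p q = real N2 / 2" "m_par p q = n_par p q + real dd" "N2 > 0" "dd > 0"
proof -
  define r where "r = r_par p q"
  have rpos: "r > 0" using assms by (simp add: r_def r_par_def)
  define a0 where "a0 = (p - 1) div r"
  define b0 where "b0 = (q - 1) div r"
  have ra: "r * a0 = p - 1" unfolding a0_def r_def r_par_def by simp
  have rb: "r * b0 = q - 1" unfolding b0_def r_def r_par_def by simp
  have b0pos: "b0 > 0" using rb assms by (cases b0) auto
  have ab: "a0 > b0"
  proof -
    have "r * b0 < r * a0" using ra rb assms by simp
    then show ?thesis by simp
  qed
  have P: "real p = real r * real a0 + 1"
  proof -
    have "real (r * a0) = real (p - 1)" using ra by simp
    then show ?thesis using assms by (simp add: of_nat_diff)
  qed
  have Q: "real q = real r * real b0 + 1"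
  proof -
    have "real (r * b0) = real (q - 1)" using rb by simp
    then show ?thesis using assms by (simp add: of_nat_diff)
  qed
  have rr: "real r > 0" using rpos by simp
  have n: "n_par p q = real ((p + 1) * b0) / 2"
    unfolding n_par_def r_def[symmetric] using rr by (simp add: Q field_simps)
  have m: "m_par p q = n_par p q + real (a0 - b0)"
    unfolding n_par_def m_par_def r_def[symmetric] using rr ab
    by (simp add: P Q of_nat_diff field_simps)
  show ?thesis
    by (rule that[OF n m]) (use b0pos ab in auto)
qed

lemma Cpos: assumes "q \<ge> 2" "p > q" shows "C_par p q > 0"
  using assms unfolding C_par_def A_par_def B_par_def
  by (intro divide_pos_pos mult_pos_pos) auto

lemma conc_wr:
  assumes "nn > 0" "mm > nn" "CC > 0" "\<epsilon> * \<epsilon> = 1"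
  shows "wr (\<lambda>x. \<epsilon> * sin (nn*x + cc)) (\<lambda>x. sin (mm*x)) (\<lambda>x. \<epsilon> * (nn * cos (nn*x+cc)))
            (\<lambda>x. mm * cos (mm*x)) (nn^2 - mm^2) CC"
proof
  fix x
  show "((\<lambda>x. \<epsilon> * sin (nn*x + cc)) has_real_derivative \<epsilon> * (nn * cos (nn*x+cc))) (at x)"
    by (auto intro!: derivative_eq_intros)
  show "((\<lambda>x. sin (mm*x)) has_real_derivative mm * cos (mm*x)) (at x)"
    by (auto intro!: derivative_eq_intros)
  show "((\<lambda>x. \<epsilon> * sin (nn * x + cc) * (mm * cos (mm * x)) - \<epsilon> * (nn * cos (nn * x + cc)) * sin (mm * x))
        has_real_derivative (nn\<^sup>2 - mm\<^sup>2) * (\<epsilon> * sin (nn * x + cc) * sin (mm * x))) (at x)"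
    by (rule derivative_eq_intros refl)+ (simp add: algebra_simps power2_eq_square)
next
  fix a
  have mpos: "mm > 0" using assms by simp
  define k where "k = \<lfloor>a * mm / pi\<rfloor>"
  have "of_int k \<le> a * mm / pi" unfolding k_def by simp
  then have "of_int k * pi / mm \<le> a" using mpos by (simp add: field_simps)
  moreover have "sin (mm * (of_int k * pi / mm)) = 0" using mpos
    by (simp add: mult.commute)
  ultimately show "\<exists>y\<le>a. sin (mm * y) = 0" by blast
next
  fix a
  have mpos: "mm > 0" using assms by simp
  define k where "k = \<lceil>a * mm / pi\<rceil>"
  have "of_int k \<ge> a * mm / pi" unfolding k_def by simp
  then have "of_int k * pi / mm \<ge> a" using mpos by (simp add: field_simps)
  moreover have "sin (mm * (of_int k * pi / mm)) = 0" using mpos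
    by (simp add: mult.commute)
  ultimately show "\<exists>y\<ge>a. sin (mm * y) = 0" by blast
next
  show "nn\<^sup>2 - mm\<^sup>2 < 0" using assms by (simp add: power_strict_mono)
qed (use assms in auto)

lemma sin_shift: "sin (y + pi * of_int K) = (if even K then 1 else -1) * sin y"
  by (simp add: sin_add)
lemma cos_shift: "cos (y + pi * of_int K) = (if even K then 1 else -1) * cos y"
  by (simp add: cos_add)



theorem lemma4p1:
  fixes p q k :: nat and argmu \<rho>1 \<rho>2 :: real
  assumes "q \<ge> 2" and "p > q"
    and "k < r_par p q"
    and "0 < \<rho>1" and "\<rho>1 < \<rho>2"
    and "simple_zeros p q argmu k \<rho>1"
    and "simple_zeros p q argmu k \<rho>2"
  shows "N_count p q argmu k \<rho>1 \<ge> N_count p q argmu k \<rho>2"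
proof -
  obtain N2 dd where nN: "n_par p q = real N2 / 2" and mN: "m_par p q = n_par p q + real dd"
    and N2: "N2 > 0" and dd: "dd > 0" using params assms(1,2) by blast
  define nn where "nn = n_par p q"
  define mm where "mm = m_par p q"
  define cc where "cc = c'_par p argmu k"
  define CC where "CC = C_par p q"
  define \<epsilon> where "\<epsilon> = ((-1)::real) ^ k"
  have eps: "\<epsilon> * \<epsilon> = 1" unfolding \<epsilon>_def by (simp flip: power_add)
  define S where "S = (\<lambda>x. \<epsilon> * sin (nn*x + cc))"
  define t where "t = (\<lambda>x. sin (mm*x))"
  define S' where "S' = (\<lambda>x. \<epsilon> * (nn * cos (nn*x+cc)))"
  define t' where "t' = (\<lambda>x. mm * cos (mm*x))"
  have nnpos: "nn > 0" using nN N2 by (simp add: nn_def)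
  have mmgt: "mm > nn" using mN dd by (simp add: nn_def mm_def)
  have CCpos: "CC > 0" using Cpos assms by (simp add: CC_def)
  interpret W: wr S t S' t' "nn^2 - mm^2" CC
    unfolding S_def t_def S'_def t'_def by (rule conc_wr[OF nnpos mmgt CCpos eps])
  have TE: "T_fun p q argmu k \<rho> = W.E \<rho>" for \<rho>
    unfolding W.E_def by (rule ext) (simp add: T_fun_def S_def t_def nn_def mm_def cc_def CC_def \<epsilon>_def)
  have dE: "(W.E \<rho> has_real_derivative \<rho> * S' x + CC * t' x) (at x)" for \<rho> x
  proof -
    have "W.E \<rho> = (\<lambda>x. \<rho> * S x + CC * t x)" by (rule ext) (simp add: W.E_def)
    then show ?thesis using W.dS W.dt by (auto intro!: derivative_eq_intros)
  qed
  have simp_E: "\<And>x. W.E \<rho> x = 0 \<Longrightarrow> \<rho> * S' x + CC * t' x \<noteq> 0"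
    if "simple_zeros p q argmu k \<rho>" for \<rho>
    using that unfolding simple_zeros_def TE using DERIV_imp_deriv[OF dE] by metis
  note s1 = simp_E[OF assms(6)] and s2 = simp_E[OF assms(7)]
  have shift: "\<exists>\<sigma>. \<sigma> * \<sigma> = 1 \<and> (\<forall>x. S (x + 2*pi * of_int j) = \<sigma> * S x) \<and> (\<forall>x. t (x + 2*pi * of_int j) = \<sigma> * t x)
       \<and> (\<forall>x. S' (x + 2*pi * of_int j) = \<sigma> * S' x) \<and> (\<forall>x. t' (x + 2*pi * of_int j) = \<sigma> * t' x)" for j :: int
  proof -
    define K where "K = j * int N2"
    define \<sigma> where "\<sigma> = (if even K then 1 else -1::real)"
    have e1: "nn * (x + 2*pi * of_int j) + cc = (nn * x + cc) + pi * of_int K" for x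
      unfolding K_def nn_def nN by (simp add: algebra_simps)
    have e2: "mm * (x + 2*pi * of_int j) = mm * x + pi * of_int (K + 2 * (j * int dd))" for x
      unfolding K_def mm_def mN nn_def nN by (simp add: algebra_simps)
    have par: "even (K + 2 * (j * int dd)) \<longleftrightarrow> even K" by simp
    show ?thesis
      by (intro exI[of _ \<sigma>] conjI allI)
         (simp_all only: S_def t_def S'_def t'_def e1 e2 sin_shift cos_shift par \<sigma>_def, auto)
  qed
  have Eshift: "W.E \<rho> (x + 2*pi * of_int j) = 0 \<longleftrightarrow> W.E \<rho> x = 0" for \<rho> x j
  proof -
    obtain \<sigma> where sg: "\<sigma> * \<sigma> = 1" "\<forall>x. S (x + 2*pi * of_int j) = \<sigma> * S x" "\<forall>x. t (x + 2*pi * of_int j) = \<sigma> * t x"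
      using shift[of j] by blast
    have "W.E \<rho> (x + 2*pi * of_int j) = \<sigma> * W.E \<rho> x" using sg by (simp add: W.E_def algebra_simps)
    moreover have "\<sigma> \<noteq> 0" using sg by auto
    ultimately show ?thesis by simp
  qed
  have Rshift: "W.Rel \<rho>1 \<rho>2 (a + 2*pi * of_int j) (c + 2*pi * of_int j)" if "W.Rel \<rho>1 \<rho>2 a c" for a c j
  proof -
    obtain \<sigma> where sg: "\<sigma> * \<sigma> = 1" "\<forall>x. S (x + 2*pi * of_int j) = \<sigma> * S x" "\<forall>x. t (x + 2*pi * of_int j) = \<sigma> * t x"
       "\<forall>x. S' (x + 2*pi * of_int j) = \<sigma> * S' x" "\<forall>x. t' (x + 2*pi * of_int j) = \<sigma> * t' x"
      using shift[of j] by blast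
    show ?thesis by (rule W.Rel_shift[of \<sigma>]) (use sg that in auto)
  qed
  define Z where "Z \<rho> = {\<theta>. 0 \<le> \<theta> \<and> \<theta> < 2 * pi \<and> W.E \<rho> \<theta> = 0}" for \<rho>
  have N: "N_count p q argmu k \<rho> = card (Z \<rho>)" for \<rho>
    by (simp add: N_count_def Z_def TE)
  have finZ: "finite (Z \<rho>1)"
  proof -
    have "finite {x. 0 \<le> x \<and> x \<le> 2*pi \<and> W.E \<rho>1 x = 0}"
      by (rule finite_simple_zeros[OF dE s1])
    then show ?thesis by (rule finite_subset[rotated]) (auto simp: Z_def)
  qed
  define cf where "cf a = (SOME c. W.Rel \<rho>1 \<rho>2 a c)" for a
  have cfR: "W.Rel \<rho>1 \<rho>2 a (cf a)" if "W.E \<rho>2 a = 0" for a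
    unfolding cf_def by (rule someI_ex, rule W.Rel_ex) (use assms(4,5) that s2 in auto)
  define fl where "fl c = \<lfloor>c / (2*pi)\<rfloor>" for c
  define fr where "fr c = c + 2*pi * of_int (- fl c)" for c
  have frb: "0 \<le> fr c \<and> fr c < 2*pi" for c
  proof -
    have "of_int (fl c) \<le> c / (2*pi)" "c / (2*pi) < of_int (fl c) + 1" unfolding fl_def by auto
    then have "of_int (fl c) * (2*pi) \<le> c" "c < (of_int (fl c) + 1) * (2*pi)"
      by (simp_all add: field_simps)
    then show ?thesis unfolding fr_def by (simp add: algebra_simps)
  qed
  define F where "F a = fr (cf a)" for a
  have img: "F ` Z \<rho>2 \<subseteq> Z \<rho>1"
  proof
    fix y assume "y \<in> F ` Z \<rho>2"
    then obtain a where a: "a \<in> Z \<rho>2" "y = F a" by blast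
    have "W.E \<rho>1 (cf a) = 0" using cfR[of a] a unfolding Z_def W.Rel_def by auto
    then have "W.E \<rho>1 (fr (cf a)) = 0" unfolding fr_def using Eshift by blast
    then show "y \<in> Z \<rho>1" using a frb unfolding Z_def F_def by auto
  qed
  have inj: "inj_on F (Z \<rho>2)"
  proof
    fix a b assume a: "a \<in> Z \<rho>2" and b: "b \<in> Z \<rho>2" and Fab: "F a = F b"
    have Ra: "W.Rel \<rho>1 \<rho>2 a (cf a)" and Rb: "W.Rel \<rho>1 \<rho>2 b (cf b)"
      using cfR a b unfolding Z_def by auto
    define j where "j = fl (cf b) - fl (cf a)"
    have "cf b = cf a + 2*pi * of_int j" using Fab unfolding F_def fr_def j_def by (simp add: algebra_simps)
    then have "W.Rel \<rho>1 \<rho>2 (a + 2*pi * of_int j) (cf b)" using Rshift[OF Ra] by simp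
    then have ab: "a + 2*pi * of_int j = b" using W.Rel_inj Rb by blast
    have bds: "0 \<le> a" "a < 2*pi" "0 \<le> b" "b < 2*pi" using a b unfolding Z_def by auto
    have h1: "2*pi * of_int j < 2*pi * 1" and h2: "2*pi * (-1) < 2*pi * of_int j" using bds ab by linarith+
    have pos: "0 < 2*pi" by simp
    have "of_int j < (1::real)" using mult_less_cancel_left_pos[OF pos] h1 by blast
    moreover have "(-1::real) < of_int j" using mult_less_cancel_left_pos[OF pos] h2 by blast
    ultimately have "j = 0" by linarith
    then show "a = b" using ab by simp
  qed
  have "card (Z \<rho>2) \<le> card (Z \<rho>1)" by (rule card_inj_on_le[OF inj img finZ])
  then show ?thesis using N by simp
qed


end
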